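(* Let $A, B \in\mathbb{C}^{n\times n}$ be matrices of index at most $1$. Then $A\leq\# B$ if and only if $A\leq^{GD1}B$, where $A\leq\# B$ means $A^2=BA$ and $R(A^* )\subseteq R(B^* )$.
   Context: For $A\in\mathbb{C}^{n\times n}$, $ind(A)$ is the smallest nonnegative integer $k$ with $\mathrm{rank}(A^k)=\mathrm{rank}(A^{k+1})$. $A\{1\}$ is the set of matrices $X$ with $AXA=A$. With $k=ind(A)$, $A\{GD\}$ is the set of matrices $X$ with $AXA=A$, $XA^{k+1}=A^k$, $A^{k+1}X=A^k$ (G-Drazin inverses). A GD1 inverse of $A$ is a matrix $A^{GD1}=A^{GD}AA^-$ with $A^-\in A\{1\}$, $A^{GD}\in A\{GD\}$. We write $A\leq^{GD1}B$ if $AA^{GD1}=BA^{GD1}$ and $A^{GD1}A=A^{GD1}B$ for some GD1 inverse $A^{GD1}$ of $A$. $A^*$ is the conjugate transpose and $R(\cdot)$ the range. *)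

theory Defs
  imports "HOL-Analysis.Analysis"
begin

type_synonym 'n cmat = "complex^'n^'n"

primrec mpow :: "'n cmat \<Rightarrow> nat \<Rightarrow> ('n::finite) cmat" where
  "mpow A 0 = mat 1"
| "mpow A (Suc k) = A ** mpow A k"

definition ind :: "('n::finite) cmat \<Rightarrow> nat" where
  "ind A = (LEAST k. rank (mpow A k) = rank (mpow A (k+1)))"

definition ctrans :: "('n::finite) cmat \<Rightarrow> 'n cmat" where
  "ctrans A = (\<chi> i j. cnj (A $ j $ i))"

definition mrange :: "('n::finite) cmat \<Rightarrow> (complex^'n) set" where
  "mrange M = range (\<lambda>x. M *v x)"

definition inv1 :: "('n::finite) cmat \<Rightarrow> 'n cmat set" where
  "inv1 A = {X. A ** X ** A = A}"

definition invGD :: "('n::finite) cmat \<Rightarrow> 'n cmat set" where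
  "invGD A = {X. A ** X ** A = A \<and> X ** mpow A (ind A + 1) = mpow A (ind A)
                 \<and> mpow A (ind A + 1) ** X = mpow A (ind A)}"

definition invGD1 :: "('n::finite) cmat \<Rightarrow> 'n cmat set" where
  "invGD1 A = {G ** A ** M | G M. G \<in> invGD A \<and> M \<in> inv1 A}"

definition GD1_le :: "('n::finite) cmat \<Rightarrow> 'n cmat \<Rightarrow> bool" where
  "GD1_le A B = (\<exists>X \<in> invGD1 A. A ** X = B ** X \<and> X ** A = X ** B)"

definition sharp_le :: "('n::finite) cmat \<Rightarrow> 'n cmat \<Rightarrow> bool" where
  "sharp_le A B = (A ** A = B ** A \<and> mrange (ctrans A) \<subseteq> mrange (ctrans B))"

end

theory Submission
  imports Defs
begin


lemma span_range_explicit: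
  fixes f :: "'i::finite \<Rightarrow> 'a::field^'n"
  assumes "x \<in> vec.span (range f)"
  shows "\<exists>c. x = (\<Sum>i\<in>UNIV. c i *s f i)"
proof -
  let ?T = "{y. \<exists>c. y = (\<Sum>i\<in>UNIV. c i *s f i)}"
  have sub: "vec.subspace ?T"
    unfolding vec.subspace_def
  proof (intro conjI ballI allI)
    show "0 \<in> ?T" by (rule CollectI, rule exI[of _ "\<lambda>_. 0"]) simp
  next
    fix x y assume "x \<in> ?T" "y \<in> ?T"
    then obtain c d where "x = (\<Sum>i\<in>UNIV. c i *s f i)" "y = (\<Sum>i\<in>UNIV. d i *s f i)" by auto
    then have "x + y = (\<Sum>i\<in>UNIV. (c i + d i) *s f i)"
      by (simp add: sum.distrib vec.scale_left_distrib)
    then show "x + y \<in> ?T" by (intro CollectI exI)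
  next
    fix a x assume "x \<in> ?T"
    then obtain c where "x = (\<Sum>i\<in>UNIV. c i *s f i)" by auto
    then have "a *s x = (\<Sum>i\<in>UNIV. (a * c i) *s f i)"
      by (simp add: vec.scale_sum_right)
    then show "a *s x \<in> ?T" by (intro CollectI exI)
  qed
  have "range f \<subseteq> ?T"
  proof
    fix y assume "y \<in> range f"
    then obtain j where j: "y = f j" by auto
    have "y = (\<Sum>i\<in>UNIV. (if i = j then 1 else 0) *s f i)"
      by (simp add: j if_distrib if_distribR sum.delta cong: if_cong)
    then show "y \<in> ?T" by (intro CollectI exI)
  qed
  then have "vec.span (range f) \<subseteq> ?T" using sub vec.span_minimal by blast
  then show ?thesis using assms by blast
qed



lemma rows_range: "rows A = range (\<lambda>i. row i A)"
  by (auto simp: rows_def)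

lemma row_mult: "row i (Y ** X) = (\<Sum>k\<in>UNIV. (Y$i$k) *s row k X)"
  by (simp add: vec_eq_iff row_def matrix_matrix_mult_def)

lemma rows_mult_span: "rows (Y ** X) \<subseteq> vec.span (rows X)"
proof
  fix r assume "r \<in> rows (Y ** X)"
  then obtain i where r: "r = row i (Y ** X)" by (auto simp: rows_def)
  show "r \<in> vec.span (rows X)"
    unfolding r row_mult
    by (intro vec.span_sum vec.span_scale vec.span_base) (auto simp: rows_def)
qed

lemma rank_mult_le: "rank (Y ** X) \<le> rank X"
  unfolding row_rank_def_gen using rows_mult_span vec.dim_mono by blast

lemma rank_eq_factor:
  fixes X :: "'a::field^'n^'m" and Y :: "'a^'m^'p"
  assumes "rank (Y ** X) = rank X"
  shows "\<exists>V. X = V ** (Y ** X)"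
proof -
  have "vec.span (rows (Y ** X)) = vec.span (vec.span (rows X))"
    apply (rule vec.dim_eq_span)
    using rows_mult_span assms by (auto simp: row_rank_def_gen)
  then have sp: "vec.span (rows (Y ** X)) = vec.span (rows X)" by simp
  have "\<forall>j. \<exists>c. row j X = (\<Sum>i\<in>UNIV. c i *s row i (Y ** X))"
  proof
    fix j
    have "row j X \<in> vec.span (rows X)" by (rule vec.span_base) (auto simp: rows_def)
    then have "row j X \<in> vec.span (range (\<lambda>i. row i (Y ** X)))" using sp by (simp add: rows_range)
    then show "\<exists>c. row j X = (\<Sum>i\<in>UNIV. c i *s row i (Y ** X))" by (rule span_range_explicit)
  qed
  then obtain c where c: "\<And>j. row j X = (\<Sum>i\<in>UNIV. c j i *s row i (Y ** X))" by metis
  have "X = (\<chi> j i. c j i) ** (Y ** X)"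
  proof -
    have "X $ j $ k = ((\<chi> j i. c j i) ** (Y ** X)) $ j $ k" for j k
    proof -
      have "X $ j $ k = row j X $ k" by (simp add: row_def)
      also have "\<dots> = (\<Sum>i\<in>UNIV. c j i *s row i (Y ** X)) $ k" by (simp only: c)
      also have "\<dots> = (\<Sum>i\<in>UNIV. c j i * (Y ** X) $ i $ k)" by (simp add: row_def)
      also have "\<dots> = ((\<chi> j i. c j i) ** (Y ** X)) $ j $ k"
        by (simp only: matrix_matrix_mult_def vec_lambda_beta)
      finally show ?thesis .
    qed
    then show ?thesis by (simp add: vec_eq_iff)
  qed
  then show ?thesis by blast
qed

lemma mv_axis: "(M *v axis j 1) $ i = M $ i $ j"
  by (simp add: matrix_vector_mult_def axis_def if_distrib if_distribR sum.delta cong: if_cong)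

lemma range_factor:
  fixes M :: "'a::field^'n^'m" and N :: "'a^'p^'m"
  assumes "range (\<lambda>x. M *v x) \<subseteq> range (\<lambda>x. N *v x)"
  shows "\<exists>W. M = N ** W"
proof -
  have "\<forall>j. \<exists>w. M *v axis j 1 = N *v w" using assms by blast
  then obtain w where w: "\<And>j. M *v axis j 1 = N *v w j" by metis
  have "M $ i $ j = (N ** (\<chi> k j. w j $ k)) $ i $ j" for i j
  proof -
    have "M $ i $ j = (N *v w j) $ i" by (metis mv_axis w)
    also have "\<dots> = (N ** (\<chi> k j. w j $ k)) $ i $ j"
      by (simp add: matrix_vector_mult_def matrix_matrix_mult_def)
    finally show ?thesis .
  qed
  then show ?thesis by (auto simp: vec_eq_iff)
qed

lemma range_sq:
  fixes A :: "'a::field^'n^'n"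
  assumes "A = V ** (A ** A)"
  shows "\<exists>U. A = A ** A ** U"
proof -
  let ?R = "range (\<lambda>x. A *v x)"
  have spR: "vec.span ?R = ?R"
    using vec.subspace_image[of UNIV "A"] by (simp add: image_def)
  have img: "(\<lambda>x. A *v x) ` ?R = range (\<lambda>x. (A ** A) *v x)"
    by (auto simp: matrix_vector_mul_assoc image_iff)
  have inj: "inj_on (\<lambda>x. A *v x) (vec.span ?R)"
  proof (rule inj_onI)
    fix x y assume "x \<in> vec.span ?R" "y \<in> vec.span ?R" and e: "A *v x = A *v y"
    then obtain a b where x: "x = A *v a" and y: "y = A *v b" using spR by auto
    have "(A ** A) *v (a - b) = 0"
      using e by (simp add: x y matrix_vector_mul_assoc[symmetric] matrix_vector_mult_diff_distrib)
    then have "A *v (a - b) = 0"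
      by (metis assms matrix_vector_mul_assoc matrix_vector_mult_0_right)
    then show "x = y" by (simp add: x y matrix_vector_mult_diff_distrib)
  qed
  have "vec.dim ((\<lambda>x. A *v x) ` ?R) = vec.dim ?R"
    by (rule vec.dim_image_eq[OF matrix_vector_mul_linear_gen inj])
  then have "vec.span (range (\<lambda>x. (A ** A) *v x)) = vec.span ?R"
    using img by (intro vec.dim_eq_span) (auto simp: matrix_vector_mul_assoc[symmetric])
  moreover have "vec.span (range (\<lambda>x. (A ** A) *v x)) = range (\<lambda>x. (A ** A) *v x)"
    using vec.subspace_image[of UNIV "A ** A"] by (simp add: image_def)
  ultimately have "?R \<subseteq> range (\<lambda>x. (A ** A) *v x)"
    using spR by simp
  then show ?thesis using range_factor by blast
qed



lemma group_inv:
  fixes A :: "'a::field^'n^'n"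
  assumes V: "A = V ** (A ** A)" and U: "A = A ** A ** U"
  shows "\<exists>G. A ** G ** A = A \<and> G ** A ** G = G \<and> A ** G = G ** A"
proof -
  have AUA: "A ** U ** A = A"
  proof -
    have "A ** U ** A = V ** (A ** A ** U) ** A" using V by (metis matrix_mul_assoc)
    also have "\<dots> = A" using U V by (metis matrix_mul_assoc)
    finally show ?thesis .
  qed
  have AVA: "A ** V ** A = A"
  proof -
    have "A ** V ** A = A ** (V ** (A ** A)) ** U" using U by (metis matrix_mul_assoc)
    also have "\<dots> = A" using U V by (metis matrix_mul_assoc)
    finally show ?thesis .
  qed
  have VA: "V ** A = A ** U"
  proof -
    have "V ** A = V ** (A ** A) ** U" using U by (metis matrix_mul_assoc)
    also have "\<dots> = A ** U" using V by simp
    finally show ?thesis .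
  qed
  let ?G = "V ** A ** U"
  have AG: "A ** ?G = A ** U" using AVA by (metis matrix_mul_assoc)
  have GA: "?G ** A = A ** U" using AUA VA by (metis matrix_mul_assoc)
  have "A ** ?G ** A = A" using AG AUA by simp
  moreover have "?G ** A ** ?G = ?G"
  proof -
    have "?G ** A ** ?G = V ** A ** (V ** A ** U)" using GA VA by simp
    also have "\<dots> = V ** (A ** V ** A) ** U" by (metis matrix_mul_assoc)
    also have "\<dots> = ?G" using AVA by simp
    finally show ?thesis .
  qed
  ultimately show ?thesis using AG GA by metis
qed



lemma mpow1[simp]: "mpow A (Suc 0) = A" by simp
lemma mpow2[simp]: "mpow A (Suc (Suc 0)) = A ** A" by simp

lemma ind_prop: "rank (mpow A (ind A)) = rank (mpow A (ind A + 1))"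
proof -
  have "\<exists>k. rank (mpow A k) = rank (mpow A (k+1))"
  proof (rule ccontr)
    assume nex: "\<not> ?thesis"
    have lt: "rank (mpow A (k+1)) < rank (mpow A k)" for k
    proof -
      have "rank (mpow A (k+1)) \<noteq> rank (mpow A k)" using nex by metis
      moreover have "rank (mpow A (k+1)) \<le> rank (mpow A k)" using rank_mult_le[of A "mpow A k"] by simp
      ultimately show ?thesis by simp
    qed
    have "rank (mpow A k) + k \<le> rank (mpow A 0)" for k
    proof (induction k)
      case 0 then show ?case by simp
    next
      case (Suc k) then show ?case using lt[of k] by simp
    qed
    from this[of "Suc (rank (mpow A 0))"] show False by simp
  qed
  then show ?thesis unfolding ind_def by (rule LeastI_ex)
qed

lemma ind0: "ind A = 0 \<Longrightarrow> \<exists>V. V ** A = mat 1"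
  using ind_prop[of A] rank_eq_factor[of A "mat 1"] by (metis Suc_eq_plus1 matrix_mul_rid mpow.simps One_nat_def)

lemma ind_le1_factor:
  assumes "ind A \<le> 1" shows "\<exists>V. A = V ** (A ** A)"
proof (cases "ind A = 0")
  case True
  then obtain V where "V ** A = mat 1" using ind0 by blast
  then have "A = V ** (A ** A)" by (metis matrix_mul_assoc matrix_mul_lid)
  then show ?thesis by blast
next
  case False
  then have "ind A = 1" using assms by simp
  then show ?thesis using ind_prop[of A] rank_eq_factor[of A A] by simp
qed

lemma invGD_iff:
  assumes "ind A \<le> 1"
  shows "G \<in> invGD A \<longleftrightarrow> A ** G ** A = A \<and> G ** (A ** A) = A \<and> (A ** A) ** G = A"
proof (cases "ind A = 0")
  case True
  then obtain V where V: "V ** A = mat 1" using ind0 by blast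
  show ?thesis
  proof
    assume "G \<in> invGD A"
    then have "A ** G ** A = A" "G ** A = mat 1" "A ** G = mat 1" using True by (auto simp: invGD_def)
    then show "A ** G ** A = A \<and> G ** (A ** A) = A \<and> (A ** A) ** G = A"
      by (metis matrix_mul_assoc matrix_mul_lid matrix_mul_rid)
  next
    assume h: "A ** G ** A = A \<and> G ** (A ** A) = A \<and> (A ** A) ** G = A"
    have "G ** A = (V ** A) ** (G ** A)" by (simp add: V)
    also have "\<dots> = V ** (A ** G ** A)" by (simp add: matrix_mul_assoc)
    also have "\<dots> = mat 1" using h V by simp
    finally have GA: "G ** A = mat 1" .
    have "G ** A = G ** (A ** A ** G)" using h by simp
    also have "\<dots> = (G ** (A ** A)) ** G" by (simp add: matrix_mul_assoc)
    also have "\<dots> = A ** G" using h by simp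
    finally have "G ** A = A ** G" .
    then have "A ** G = mat 1" using GA by simp
    then show "G \<in> invGD A" using True h GA by (auto simp: invGD_def)
  qed
next
  case False
  then have "ind A = 1" using assms by simp
  then show ?thesis by (auto simp: invGD_def)
qed

lemma ctrans_mult: "ctrans (X ** Y) = ctrans Y ** ctrans X"
  by (simp add: ctrans_def matrix_matrix_mult_def vec_eq_iff cnj_sum mult.commute)

lemma ctrans_ctrans[simp]: "ctrans (ctrans X) = X"
  by (simp add: ctrans_def vec_eq_iff)

lemma mm_diff_left: "(A::'a::comm_ring_1^'n^'n) ** (B - C) = A ** B - A ** C"
  by (simp add: matrix_matrix_mult_def vec_eq_iff sum_subtractf algebra_simps)
lemma mm_diff_right: "((B::'a::comm_ring_1^'n^'n) - C) ** A = B ** A - C ** A"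
  by (simp add: matrix_matrix_mult_def vec_eq_iff sum_subtractf algebra_simps)
lemma mm_add_right: "((B::'a::comm_ring_1^'n^'n) + C) ** A = B ** A + C ** A"
  by (simp add: matrix_matrix_mult_def vec_eq_iff sum.distrib algebra_simps)
lemma mm_add_left: "(A::'a::comm_ring_1^'n^'n) ** (B + C) = A ** B + A ** C"
  by (simp add: matrix_matrix_mult_def vec_eq_iff sum.distrib algebra_simps)


lemma group_inv_ind:
  fixes A :: "complex^'n::finite^'n"
  assumes "ind A \<le> 1"
  shows "\<exists>G. A ** G ** A = A \<and> G ** A ** G = G \<and> A ** G = G ** A"
proof -
  obtain V where V: "A = V ** (A ** A)" using ind_le1_factor[OF assms] by blast
  then obtain U where "A = A ** A ** U" using range_sq by blast
  then show ?thesis using group_inv V by blast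
qed


lemma range_ctrans_iff: "mrange (ctrans A) \<subseteq> mrange (ctrans B) \<longleftrightarrow> (\<exists>Z. A = Z ** B)"
proof
  assume "mrange (ctrans A) \<subseteq> mrange (ctrans B)"
  then obtain W where "ctrans A = ctrans B ** W" using range_factor unfolding mrange_def by blast
  then have "A = ctrans W ** B" by (metis ctrans_ctrans ctrans_mult)
  then show "\<exists>Z. A = Z ** B" by blast
next
  assume "\<exists>Z. A = Z ** B"
  then obtain Z where "A = Z ** B" by blast
  then have "ctrans A = ctrans B ** ctrans Z" by (simp add: ctrans_mult)
  then show "mrange (ctrans A) \<subseteq> mrange (ctrans B)"
    unfolding mrange_def by (auto simp: matrix_vector_mul_assoc[symmetric])
qed

theorem theorem2p14:
  fixes A B :: "complex^'n::finite^'n"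
  assumes "ind A \<le> 1" and "ind B \<le> 1"
  shows "sharp_le A B \<longleftrightarrow> GD1_le A B"
proof
  assume "sharp_le A B"
  then have AA: "A ** A = B ** A" and "mrange (ctrans A) \<subseteq> mrange (ctrans B)"
    by (auto simp: sharp_le_def)
  then obtain Z where Z: "A = Z ** B" using range_ctrans_iff by blast
  obtain G where G1: "A ** G ** A = A" and G2: "G ** A ** G = G" and G3: "A ** G = G ** A"
    using group_inv_ind[OF assms(1)] by blast
  obtain H where H1: "B ** H ** B = B" and H2: "H ** B ** H = H" and H3: "B ** H = H ** B"
    using group_inv_ind[OF assms(2)] by blast
  have GA2: "G ** (A ** A) = A" using G1 G3 by (metis matrix_mul_assoc)
  have A2G: "(A ** A) ** G = A" using G1 G3 by (metis matrix_mul_assoc)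
  have Ginv: "G \<in> invGD A" using invGD_iff[OF assms(1)] G1 GA2 A2G by blast
  have BAG: "B ** A ** G = A" using AA A2G by simp
  have AHB: "A ** H ** B = A" using Z H1 by (metis matrix_mul_assoc)
  have BHA: "B ** H ** A = A"
  proof -
    have "B ** H ** A = B ** H ** (B ** A ** G)" using BAG by simp
    also have "\<dots> = (B ** H ** B) ** A ** G" by (metis matrix_mul_assoc)
    finally show ?thesis using H1 BAG by simp
  qed
  have AHA: "A ** H ** A = A"
  proof -
    have "A ** H ** A = A ** H ** (B ** A ** G)" using BAG by simp
    also have "\<dots> = (A ** H ** B) ** A ** G" by (metis matrix_mul_assoc)
    finally show ?thesis using AHB A2G by (simp add: matrix_mul_assoc)
  qed
  define M where "M = G + G ** A ** H - G ** B ** H"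
  have AM: "A ** M = A ** G + A ** H - A ** G ** B ** H"
    unfolding M_def using G1
    by (simp add: mm_diff_left mm_add_left matrix_mul_assoc)
  have AMB: "A ** M ** B = A"
  proof -
    have "A ** M ** B = A ** G ** B + A ** H ** B - A ** G ** (B ** H ** B)"
      unfolding AM by (simp add: mm_diff_right mm_add_right matrix_mul_assoc)
    then show ?thesis using AHB H1 by simp
  qed
  have AMA: "A ** M ** A = A"
  proof -
    have "A ** M ** A = A ** G ** A + A ** H ** A - A ** G ** (B ** H ** A)"
      unfolding AM by (simp add: mm_diff_right mm_add_right matrix_mul_assoc)
    then show ?thesis using AHA BHA G1 by simp
  qed
  have Minv: "M \<in> inv1 A" using AMA by (simp add: inv1_def)
  define X where "X = G ** A ** M"
  have Xin: "X \<in> invGD1 A" unfolding invGD1_def X_def using Ginv Minv by blast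
  have BGA: "B ** G ** A = A" using BAG G3 by (metis matrix_mul_assoc)
  have "A ** X = A ** M" unfolding X_def using G1 by (metis matrix_mul_assoc)
  moreover have "B ** X = A ** M" unfolding X_def using BGA by (metis matrix_mul_assoc)
  moreover have "X ** A = G ** A" unfolding X_def using AMA by (metis matrix_mul_assoc)
  moreover have "X ** B = G ** A" unfolding X_def using AMB by (metis matrix_mul_assoc)
  ultimately show "GD1_le A B" using Xin unfolding GD1_le_def by metis
next
  assume "GD1_le A B"
  then obtain X where Xin: "X \<in> invGD1 A" and e1: "A ** X = B ** X" and e2: "X ** A = X ** B"
    unfolding GD1_le_def by blast
  then obtain G M where X: "X = G ** A ** M" and Gin: "G \<in> invGD A" and Min: "M \<in> inv1 A"
    unfolding invGD1_def by blast
  have G1: "A ** G ** A = A" and GA2: "G ** (A ** A) = A" and A2G: "(A ** A) ** G = A"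
    using Gin invGD_iff[OF assms(1)] by auto
  have AMA: "A ** M ** A = A" using Min by (simp add: inv1_def)
  have "A ** M = B ** G ** A ** M"
  proof -
    have "A ** X = A ** M" unfolding X using G1 by (metis matrix_mul_assoc)
    moreover have "B ** X = B ** G ** A ** M" unfolding X by (metis matrix_mul_assoc)
    ultimately show ?thesis using e1 by simp
  qed
  then have "A ** M ** A = B ** G ** A ** M ** A" by simp
  then have BGA: "B ** G ** A = A" using AMA by (metis matrix_mul_assoc)
  have sq: "A ** A = B ** A"
  proof -
    have "B ** A = B ** (G ** (A ** A))" using GA2 by simp
    also have "\<dots> = (B ** G ** A) ** A" by (metis matrix_mul_assoc)
    finally show ?thesis using BGA by simp
  qed
  have "G ** A = G ** A ** M ** B"
  proof -
    have "X ** A = G ** A" unfolding X using AMA by (metis matrix_mul_assoc)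
    then show ?thesis using e2 X by simp
  qed
  then have "A ** (G ** A) = A ** (G ** A ** M ** B)" by simp
  then have "A = (A ** M) ** B" using G1 by (metis matrix_mul_assoc)
  then have "mrange (ctrans A) \<subseteq> mrange (ctrans B)" using range_ctrans_iff by blast
  then show "sharp_le A B" using sq by (simp add: sharp_le_def)
qed


end
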